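(* Consider the NPMC-CX procedure described below and suppose Assumptions (A2'), (A3), (A4) hold. Then for any bounded set $\Lambda\subseteq\mathbb R_+^{|\mathcal A|}$, $$\lim_{n\to\infty}\sup_{\lambda\in\Lambda}\big|F_\lambda(\hat\phi_\lambda)-F_\lambda(\phi^*_\lambda)\big|=0\quad\text{almost surely.}$$
   Context: Setting. $(X,Y)$ random pair, $X\in\mathcal X\subseteq\mathbb R^p$, $Y\in\{1,\dots,K\}$, $\pi_k^*=\mathbb P(Y=k)\in(0,1)$; training data $(x_i,y_i)_{i=1}^n$ i.i.d. copies. $R_k(\phi)=\mathbb P_{X|Y=k}(\phi(X)\ne k)$ (for data-dependent $\phi$, evaluated with $\phi$ held fixed). Fix $\mathcal A\subseteq\{1,\dots,K\}$, $\alpha_k\in[0,1)$ ($k\in\mathcal A$), $w_k\ge0$. $c_k(\lambda,\pi)=w_k/\pi_k$ ($k\notin\mathcal A$), $(w_k+\lambda_k)/\pi_k$ ($k\in\mathcal A$); $F_\lambda(\phi)=\sum_kw_kR_k(\phi)+\sum_{k\in\mathcal A}\lambda_k(R_k(\phi)-\alpha_k)$; $\phi^*_\lambda(x)\in\arg\max_kc_k(\lambda,\pi^* )\mathbb P_{Y|X=x}(Y=k)$; $G(\lambda)=F_\lambda(\phi^*_\lambda)$; $\lambda^*=\arg\max_{\lambda\in\mathbb R_+^{|\mathcal A|}}G(\lambda)$. NPMC-CX: $\widehat{\mathbb P}_{Y|X=x}(Y=k)=\mathbb P_{Y|X=x}(Y=k;\hat\beta)$ from a parametric family indexed by $\beta$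 in a compact set of a fixed-dimensional Euclidean space, $\hat\beta$ from the training data; $\hat\pi_k=n_k/n$ with $n_k=\#\{i:y_i=k\}$; $\hat\phi_\lambda(x)\in\arg\max_kc_k(\lambda,\hat\pi)\widehat{\mathbb P}_{Y|X=x}(Y=k)$. Assumptions. (A2') for all $k$ and almost every $x$, $\lim_{n\to\infty}\widehat{\mathbb P}_{Y|X=x}(Y=k)=\mathbb P_{Y|X=x}(Y=k)$ a.s. w.r.t. the training data. (A3) $G$ twice continuously differentiable at $\lambda^*$ with $\nabla^2G(\lambda^* )$ negative definite. (A4) for almost all $x$, $\mathbb P_{Y|X=x}(Y=k;\beta)$ continuous in $\beta$. *)

theory Defs
  imports "HOL-Probability.Probability"
begin

definition prior :: "('x \<times> 'k) measure \<Rightarrow> 'k \<Rightarrow> real" where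
  "prior D k = measure D {z \<in> space D. snd z = k}"

definition Rk :: "('x \<times> 'k) measure \<Rightarrow> 'k \<Rightarrow> ('x \<Rightarrow> 'k) \<Rightarrow> real" where
  "Rk D k \<phi> = measure D {z \<in> space D. \<phi> (fst z) \<noteq> k \<and> snd z = k} / prior D k"

definition cost :: "('k::finite \<Rightarrow> real) \<Rightarrow> 'k set \<Rightarrow> real^'k \<Rightarrow> ('k \<Rightarrow> real) \<Rightarrow> 'k \<Rightarrow> real" where
  "cost w A lam p k = (if k \<in> A then (w k + lam $ k) / p k else w k / p k)"

definition Flag :: "('k::finite \<Rightarrow> real) \<Rightarrow> 'k set \<Rightarrow> ('k \<Rightarrow> real) \<Rightarrow> ('x \<times> 'k) measure
    \<Rightarrow> real^'k \<Rightarrow> ('x \<Rightarrow> 'k) \<Rightarrow> real" where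
  "Flag w A \<alpha> D lam \<phi> = (\<Sum>k\<in>UNIV. w k * Rk D k \<phi>) + (\<Sum>k\<in>A. lam $ k * (Rk D k \<phi> - \<alpha> k))"

definition argmax_set :: "('k \<Rightarrow> real) \<Rightarrow> 'k set" where
  "argmax_set f = {k. \<forall>j. f j \<le> f k}"

text \<open>R_+^{|A|}, embedded in real^'k with zero coordinates outside A; and its linear span.\<close>
definition lam_space :: "'k::finite set \<Rightarrow> (real^'k) set" where
  "lam_space A = {lam. \<forall>k. 0 \<le> lam $ k \<and> (k \<notin> A \<longrightarrow> lam $ k = 0)}"

definition lam_subspace :: "'k::finite set \<Rightarrow> (real^'k) set" where
  "lam_subspace A = {lam. \<forall>k. k \<notin> A \<longrightarrow> lam $ k = 0}"

text \<open>eta x k is a version of P(Y = k | X = x) (regular conditional probability).\<close>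
definition is_posterior :: "('x::topological_space \<times> 'k) measure \<Rightarrow> ('x \<Rightarrow> 'k \<Rightarrow> real) \<Rightarrow> bool" where
  "is_posterior D \<eta> \<longleftrightarrow> (\<forall>k. (\<lambda>x. \<eta> x k) \<in> borel_measurable borel) \<and>
     (\<forall>k. \<forall>B \<in> sets borel. measure D {z \<in> space D. fst z \<in> B \<and> snd z = k}
          = (\<integral>x. indicator B x * \<eta> x k \<partial>(distr D borel fst)))"

definition pi_hat :: "(nat \<Rightarrow> 'w \<Rightarrow> 'x \<times> 'k) \<Rightarrow> nat \<Rightarrow> 'w \<Rightarrow> 'k \<Rightarrow> real" where
  "pi_hat Z n \<omega> k = real (card {i. i < n \<and> snd (Z i \<omega>) = k}) / real n"

definition twice_cont_diff_negdef_at ::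
  "(real^'k \<Rightarrow> real) \<Rightarrow> (real^'k) set \<Rightarrow> (real^'k) set \<Rightarrow> real^'k \<Rightarrow> bool" where
  "twice_cont_diff_negdef_at G L S l0 \<longleftrightarrow>
     (\<exists>e>0. \<exists>G' G''.
        (\<forall>l \<in> L \<inter> ball l0 e.
            (G has_derivative blinfun_apply (G' l)) (at l within L) \<and>
            (G' has_derivative blinfun_apply (G'' l)) (at l within L)) \<and>
        continuous (at l0 within L) G'' \<and>
        (\<forall>h \<in> S. h \<noteq> 0 \<longrightarrow> blinfun_apply (blinfun_apply (G'' l0) h) h < 0))"

end

theory Submission
  imports Defs
begin




lemma conv_transfer:
  fixes b :: "nat \<Rightarrow> 'b::euclidean_space" and f :: "'b \<Rightarrow> real"
  assumes cpt: "compact S" and bS: "\<And>n. b n \<in> S"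
    and cont: "continuous_on S f"
    and cover: "\<And>l. l \<in> S \<Longrightarrow> f l \<noteq> c \<Longrightarrow>
       \<exists>g d. continuous_on S g \<and> g l \<noteq> (d::real) \<and> (\<lambda>n. g (b n)) \<longlonglongrightarrow> d"
  shows "(\<lambda>n. f (b n)) \<longlonglongrightarrow> c"
proof (rule ccontr)
  assume nc: "\<not> (\<lambda>n. f (b n)) \<longlonglongrightarrow> c"
  then obtain e where e: "e > 0" "\<not> eventually (\<lambda>n. dist (f (b n)) c < e) sequentially"
    unfolding tendsto_iff by blast
  obtain r :: "nat \<Rightarrow> nat" where r: "strict_mono r" "\<And>n. \<not> dist (f (b (r n))) c < e"
    using not_eventually_sequentiallyD[OF e(2)] by blast
  have "\<forall>n. (b \<circ> r) n \<in> S" using bS by simp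
  then obtain l s where l: "l \<in> S" "strict_mono s" "((b \<circ> r) \<circ> s) \<longlonglongrightarrow> l"
    using cpt unfolding compact_def by blast
  have seqS: "\<forall>n. ((b \<circ> r) \<circ> s) n \<in> S" using bS by simp
  have "(f \<circ> ((b \<circ> r) \<circ> s)) \<longlonglongrightarrow> f l"
    using cont l seqS unfolding continuous_on_sequentially by blast
  hence t1: "(\<lambda>n. dist (f (b (r (s n)))) c) \<longlonglongrightarrow> dist (f l) c"
    by (intro tendsto_dist) (auto simp: o_def)
  have "e \<le> dist (f l) c"
    by (rule tendsto_lowerbound[OF t1]) (use r in \<open>auto simp: not_less\<close>)
  hence "f l \<noteq> c" using e by auto
  then obtain g :: "'b \<Rightarrow> real" and d :: real where g: "continuous_on S g" "g l \<noteq> d" "(\<lambda>n. g (b n)) \<longlonglongrightarrow> d"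
    using cover[OF l(1)] by blast
  have "(g \<circ> ((b \<circ> r) \<circ> s)) \<longlonglongrightarrow> g l"
    using g l seqS unfolding continuous_on_sequentially by blast
  moreover have "(g \<circ> ((b \<circ> r) \<circ> s)) \<longlonglongrightarrow> d"
  proof -
    have "strict_mono (r \<circ> s)" using r l by (simp add: strict_mono_o)
    from LIMSEQ_subseq_LIMSEQ[OF g(3) this] show ?thesis by (simp add: o_def)
  qed
  ultimately have "g l = d" by (rule LIMSEQ_unique)
  with g show False by simp
qed


lemma swap_AE:
  fixes q :: "'b::euclidean_space \<Rightarrow> 'x \<Rightarrow> 'k::finite \<Rightarrow> real" and bet :: "nat \<Rightarrow> 'w \<Rightarrow> 'b"
  assumes cpt: "compact S" and bS: "\<And>n \<omega>. bet n \<omega> \<in> S"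
    and cont: "\<And>x k. x \<in> G \<Longrightarrow> continuous_on S (\<lambda>\<beta>. q \<beta> x k)"
    and ae: "\<And>x. x \<in> G \<Longrightarrow> AE \<omega> in M. \<forall>k. (\<lambda>n. q (bet n \<omega>) x k) \<longlonglongrightarrow> \<eta> x k"
  shows "AE \<omega> in M. \<forall>x\<in>G. \<forall>k. (\<lambda>n. q (bet n \<omega>) x k) \<longlonglongrightarrow> \<eta> x k"
proof -
  have ex: "\<forall>x\<in>G. \<exists>V. open V \<and> V \<inter> S = {\<beta>\<in>S. \<exists>k. q \<beta> x k \<noteq> \<eta> x k}"
  proof (intro ballI)
    fix x assume x: "x \<in> G"
    have "\<forall>k. \<exists>A. open A \<and> A \<inter> S = (\<lambda>\<beta>. q \<beta> x k) -` (- {\<eta> x k}) \<inter> S"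
      using cont[OF x] continuous_on_open_invariant by (metis open_Compl closed_singleton)
    then obtain A where A: "\<And>k. open (A k)" "\<And>k. A k \<inter> S = (\<lambda>\<beta>. q \<beta> x k) -` (- {\<eta> x k}) \<inter> S"
      by metis
    show "\<exists>V. open V \<and> V \<inter> S = {\<beta>\<in>S. \<exists>k. q \<beta> x k \<noteq> \<eta> x k}"
      by (rule exI[of _ "\<Union>k. A k"]) (use A in blast)
  qed
  from bchoice[OF ex] obtain V where V0: "\<forall>x\<in>G. open (V x) \<and> V x \<inter> S = {\<beta>\<in>S. \<exists>k. q \<beta> x k \<noteq> \<eta> x k}"
    by blast
  have V: "\<And>x. x \<in> G \<Longrightarrow> open (V x)"
      "\<And>x. x \<in> G \<Longrightarrow> V x \<inter> S = {\<beta>\<in>S. \<exists>k. q \<beta> x k \<noteq> \<eta> x k}"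
    using V0 by auto
  obtain F' where F': "F' \<subseteq> V ` G" "countable F'" "\<Union>F' = \<Union>(V ` G)"
    using Lindelof[of "V ` G"] V(1) by blast
  then obtain G' where G': "countable G'" "G' \<subseteq> G" "F' = V ` G'"
    using countable_subset_image by metis
  have "AE \<omega> in M. \<forall>x\<in>G'. \<forall>k. (\<lambda>n. q (bet n \<omega>) x k) \<longlonglongrightarrow> \<eta> x k"
    using G' ae by (subst AE_ball_countable) auto
  then show ?thesis
  proof (rule eventually_mono)
    fix \<omega> assume H: "\<forall>x\<in>G'. \<forall>k. (\<lambda>n. q (bet n \<omega>) x k) \<longlonglongrightarrow> \<eta> x k"
    show "\<forall>x\<in>G. \<forall>k. (\<lambda>n. q (bet n \<omega>) x k) \<longlonglongrightarrow> \<eta> x k"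
    proof (intro ballI allI)
      fix x k assume x: "x \<in> G"
      show "(\<lambda>n. q (bet n \<omega>) x k) \<longlonglongrightarrow> \<eta> x k"
      proof (rule conv_transfer[OF cpt, of "\<lambda>n. bet n \<omega>"])
        show "\<And>n. bet n \<omega> \<in> S" by (rule bS)
        show "continuous_on S (\<lambda>\<beta>. q \<beta> x k)" by (rule cont[OF x])
        fix l assume l: "l \<in> S" "q l x k \<noteq> \<eta> x k"
        then have "l \<in> V x" using V(2)[OF x] by blast
        then have "l \<in> \<Union>F'" using F'(3) x by blast
        then obtain x' where x': "x' \<in> G'" "l \<in> V x'" using G'(3) by blast
        then have "x' \<in> G" using G' by blast
        then obtain k' where k': "q l x' k' \<noteq> \<eta> x' k'" using V(2) x' l by blast
        show "\<exists>g d. continuous_on S g \<and> g l \<noteq> (d::real) \<and> (\<lambda>n. g (bet n \<omega>)) \<longlonglongrightarrow> d"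
        proof -
          have "continuous_on S (\<lambda>\<beta>. q \<beta> x' k') \<and> q l x' k' \<noteq> \<eta> x' k' \<and> (\<lambda>n. q (bet n \<omega>) x' k') \<longlonglongrightarrow> \<eta> x' k'"
            using k' cont[OF \<open>x' \<in> G\<close>] H x'(1) by blast
          then show ?thesis by blast
        qed
      qed
    qed
  qed
qed



lemma slln_bounded:
  assumes M: "prob_space M"
    and ind: "prob_space.indep_vars M (\<lambda>_. borel) X UNIV"
    and idd: "\<And>i. distr M borel (X i) = distr M borel (X 0)"
    and rng: "\<And>i \<omega>. X i \<omega> \<in> {0..1::real}"
  shows "AE \<omega> in M. (\<lambda>n. (\<Sum>i<n. X i \<omega>) / real n) \<longlonglongrightarrow> prob_space.expectation M (X 0)"
proof -
  interpret prob_space M by fact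
  define \<mu> where "\<mu> = expectation (X 0)"
  have rv: "random_variable borel (X i)" for i
    using ind unfolding indep_vars_def by blast
  define A where "A = (\<lambda>(m::nat) (n::nat). {\<omega>\<in>space M. \<bar>(\<Sum>i\<in>{..<n}. X i \<omega>) / real (card {..<n}) - \<mu>\<bar> \<ge> 1 / real (Suc m)})"
  have Ameas: "A m n \<in> sets M" for m n
    unfolding A_def using rv by measurable
  have bound: "prob (A m n) \<le> 2 * exp (-2 * real n * (1 / real (Suc m))\<^sup>2 / (1 - 0)\<^sup>2)" for m n
  proof (cases "n = 0")
    case True
    have "prob (A m n) \<le> 1" by simp
    also have "\<dots> \<le> 2 * exp (-2 * real n * (1 / real (Suc m))\<^sup>2 / (1 - 0)\<^sup>2)" using True by simp
    finally show ?thesis .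
  next
    case False
    interpret H: Hoeffding_ineq_iid M "{..<n}" X "X 0" 0 1 \<mu>
    proof unfold_locales
      show "indep_vars (\<lambda>_. borel) X {..<n}" using indep_vars_subset[OF ind] by blast
      show "AE x in M. X 0 x \<in> {0..1}" using rng by simp
      show "finite {..<n}" by simp
      show "\<And>i. i \<in> {..<n} \<Longrightarrow> distr M borel (X i) = distr M borel (X 0)" by (rule idd)
      show "random_variable borel (X 0)" by (rule rv)
      show "\<mu> \<equiv> expectation (X 0)" unfolding \<mu>_def by (rule reflexive)
    qed
    have "prob {x \<in> space M. 1 / real (Suc m) \<le> \<bar>(\<Sum>i\<in>{..<n}. X i x) / real (card {..<n}) - \<mu>\<bar>}
       \<le> 2 * exp (- 2 * real (card {..<n}) * (1 / real (Suc m))\<^sup>2 / (1 - 0)\<^sup>2)"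
      by (rule H.Hoeffding_ineq_abs_ge') (use False in auto)
    then show ?thesis unfolding A_def by simp
  qed
  have summ: "summable (\<lambda>n. measure M (A m n))" for m
  proof (rule summable_comparison_test)
    define r where "r = exp (-2 * (1 / real (Suc m))\<^sup>2)"
    have r: "0 \<le> r" "r < 1" unfolding r_def by auto
    have eq: "2 * exp (-2 * real n * (1 / real (Suc m))\<^sup>2 / (1 - 0)\<^sup>2) = 2 * r ^ n" for n
      unfolding r_def by (simp add: exp_of_nat_mult[symmetric] algebra_simps)
    show "\<exists>N. \<forall>n\<ge>N. norm (measure M (A m n)) \<le> 2 * r ^ n"
      using bound[of m] eq by (intro exI[of _ 0] allI impI) (metis abs_of_nonneg measure_nonneg real_norm_def)
    show "summable (\<lambda>n. 2 * r ^ n)" using r by (intro summable_mult summable_geometric) auto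
  qed
  have "AE \<omega> in M. eventually (\<lambda>n. \<omega> \<in> space M - A m n) sequentially" for m
    by (rule borel_cantelli_AE1[OF Ameas]) (auto simp: summ less_top[symmetric])
  hence "AE \<omega> in M. \<forall>m. eventually (\<lambda>n. \<omega> \<in> space M - A m n) sequentially"
    by (simp add: AE_all_countable)
  then show ?thesis
  proof (rule eventually_mono)
    fix \<omega> assume H: "\<forall>m. eventually (\<lambda>n. \<omega> \<in> space M - A m n) sequentially"
    show "(\<lambda>n. (\<Sum>i<n. X i \<omega>) / real n) \<longlonglongrightarrow> expectation (X 0)"
      unfolding \<mu>_def[symmetric]
    proof (rule LIMSEQ_I)
      fix r :: real assume r: "r > 0"
      obtain m where m: "1 / real (Suc m) < r"
        using r by (metis reals_Archimedean inverse_eq_divide)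
      from H[rule_format, of m] obtain N where N: "\<And>n. n \<ge> N \<Longrightarrow> \<omega> \<in> space M - A m n"
        unfolding eventually_sequentially by blast
      show "\<exists>no. \<forall>n\<ge>no. norm ((\<Sum>i<n. X i \<omega>) / real n - \<mu>) < r"
      proof (intro exI allI impI)
        fix n assume "n \<ge> N"
        with N have "\<omega> \<in> space M - A m n" by blast
        hence "\<bar>(\<Sum>i<n. X i \<omega>) / real n - \<mu>\<bar> < 1 / real (Suc m)"
          unfolding A_def by auto
        then show "norm ((\<Sum>i<n. X i \<omega>) / real n - \<mu>) < r" using m by simp
      qed
    qed
  qed
qed




lemma space_D:
  assumes "sets D = sets (borel \<Otimes>\<^sub>M count_space UNIV)"
  shows "space D = UNIV"
  using sets_eq_imp_space_eq[OF assms] by (simp add: space_pair_measure)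

lemma post_eq:
  fixes D :: "('x::topological_space \<times> 'k) measure"
  assumes "is_posterior D \<eta>" "B \<in> sets borel"
  shows "measure D {z \<in> space D. fst z \<in> B \<and> snd z = k} = (\<integral>x. indicator B x * \<eta> x k \<partial>distr D borel fst)"
  using assms unfolding is_posterior_def by blast

lemma post_prior:
  fixes D :: "('x::topological_space \<times> 'k) measure"
  assumes "is_posterior D \<eta>"
  shows "prior D k = (\<integral>x. \<eta> x k \<partial>distr D borel fst)"
  using post_eq[OF assms, of UNIV k] unfolding prior_def by simp

lemma eta_integrable:
  fixes D :: "('x::topological_space \<times> 'k) measure"
  assumes D: "prob_space D" "sets D = sets (borel \<Otimes>\<^sub>M count_space UNIV)"
   and prior: "0 < prior D k"
   and post: "is_posterior D \<eta>"
  shows "integrable (distr D borel fst) (\<lambda>x. \<eta> x k)"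
proof (rule ccontr)
  assume ni: "\<not> ?thesis"
  have "prior D k = (\<integral>x. \<eta> x k \<partial>distr D borel fst)" by (rule post_prior[OF post])
  also have "\<dots> = 0" using ni by (rule not_integrable_integral_eq)
  finally show False using prior by simp
qed

lemma post_meas:
  fixes D :: "('x::topological_space \<times> 'k) measure"
  assumes post: "is_posterior D \<eta>"
  shows "(\<lambda>x. \<eta> x k) \<in> borel_measurable borel"
  using post unfolding is_posterior_def by blast

lemma Rk_formula:
  fixes D :: "('x::topological_space \<times> 'k) measure"
  assumes D: "prob_space D" "sets D = sets (borel \<Otimes>\<^sub>M count_space UNIV)"
   and prior: "0 < prior D k"
   and post: "is_posterior D \<eta>"
   and \<phi>: "\<phi> \<in> borel \<rightarrow>\<^sub>M count_space UNIV"
  shows "Rk D k \<phi> = 1 - (\<integral>x. indicator (\<phi> -` {k}) x * \<eta> x k \<partial>distr D borel fst) / prior D k"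
proof -
  let ?PX = "distr D borel fst"
  have int: "integrable ?PX (\<lambda>x. \<eta> x k)" by (rule eta_integrable[OF D prior post])
  have Bm: "\<phi> -` B \<in> sets borel" for B
    using measurable_sets[OF \<phi>, of B] by simp
  have spPX: "space ?PX = UNIV" by simp
  have int2: "integrable ?PX (\<lambda>x. indicator (\<phi> -` {k}) x * \<eta> x k)"
    using integrable_mult_indicator[of "\<phi> -` {k}" ?PX "\<lambda>x. \<eta> x k"] int Bm by simp
  have "measure D {z \<in> space D. \<phi> (fst z) \<noteq> k \<and> snd z = k}
      = measure D {z \<in> space D. fst z \<in> \<phi> -` (- {k}) \<and> snd z = k}" by simp
  also have "\<dots> = (\<integral>x. indicator (\<phi> -` (- {k})) x * \<eta> x k \<partial>?PX)"
    by (rule post_eq[OF post Bm])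
  also have "\<dots> = (\<integral>x. \<eta> x k - indicator (\<phi> -` {k}) x * \<eta> x k \<partial>?PX)"
    by (intro Bochner_Integration.integral_cong) (auto simp: indicator_def)
  also have "\<dots> = (\<integral>x. \<eta> x k \<partial>?PX) - (\<integral>x. indicator (\<phi> -` {k}) x * \<eta> x k \<partial>?PX)"
    by (rule Bochner_Integration.integral_diff[OF int int2])
  also have "(\<integral>x. \<eta> x k \<partial>?PX) = prior D k"
    by (rule post_prior[OF post, symmetric])
  finally show ?thesis unfolding Rk_def using prior by (simp add: field_simps)
qed


lemma cost_lam:
  assumes "lam \<in> lam_space A"
  shows "cost w A lam p k = (w k + lam $ k) / p k"
  using assms unfolding cost_def lam_space_def by auto

lemma Flag_formula:
  fixes D :: "('x::topological_space \<times> 'k::finite) measure"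
  assumes D: "prob_space D" "sets D = sets (borel \<Otimes>\<^sub>M count_space UNIV)"
   and prior: "\<And>k. 0 < prior D k"
   and post: "is_posterior D \<eta>"
   and lam: "lam \<in> lam_space A"
   and \<phi>: "\<phi> \<in> borel \<rightarrow>\<^sub>M count_space UNIV"
  shows "Flag w A \<alpha> D lam \<phi> = (\<Sum>k\<in>UNIV. w k + lam $ k)
     - (\<integral>x. (\<Sum>k\<in>UNIV. indicator (\<phi> -` {k}) x * (cost w A lam (prior D) k * \<eta> x k)) \<partial>distr D borel fst)
     - (\<Sum>k\<in>A. lam $ k * \<alpha> k)"
proof -
  let ?PX = "distr D borel fst"
  define I where "I k = (\<integral>x. indicator (\<phi> -` {k}) x * \<eta> x k \<partial>?PX)" for k
  have R: "Rk D k \<phi> = 1 - I k / prior D k" for k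
    unfolding I_def by (rule Rk_formula[OF D prior post \<phi>])
  have Bm: "\<phi> -` B \<in> sets borel" for B
    using measurable_sets[OF \<phi>, of B] by simp
  have int2: "integrable ?PX (\<lambda>x. indicator (\<phi> -` {k}) x * \<eta> x k)" for k
    using integrable_mult_indicator[of "\<phi> -` {k}" ?PX "\<lambda>x. \<eta> x k"] eta_integrable[OF D prior post] Bm by simp
  have lam0: "k \<notin> A \<Longrightarrow> lam $ k = 0" for k using lam unfolding lam_space_def by auto
  have sA: "(\<Sum>k\<in>A. lam $ k * Rk D k \<phi>) = (\<Sum>k\<in>UNIV. lam $ k * Rk D k \<phi>)"
    by (rule sum.mono_neutral_left) (auto simp: lam0)
  have intc: "\<And>k. integrable ?PX (\<lambda>x. cost w A lam (prior D) k * (indicator (\<phi> -` {k}) x * \<eta> x k))"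
    using int2 by (intro integrable_mult_right)
  have "(\<integral>x. (\<Sum>k\<in>UNIV. indicator (\<phi> -` {k}) x * (cost w A lam (prior D) k * \<eta> x k)) \<partial>?PX)
      = (\<integral>x. (\<Sum>k\<in>UNIV. cost w A lam (prior D) k * (indicator (\<phi> -` {k}) x * \<eta> x k)) \<partial>?PX)"
    by (intro Bochner_Integration.integral_cong refl sum.cong) (simp add: mult_ac)
  also have "\<dots> = (\<Sum>k\<in>UNIV. (\<integral>x. cost w A lam (prior D) k * (indicator (\<phi> -` {k}) x * \<eta> x k) \<partial>?PX))"
    by (rule Bochner_Integration.integral_sum) (rule intc)
  also have "\<dots> = (\<Sum>k\<in>UNIV. cost w A lam (prior D) k * I k)"
    unfolding I_def by simp
  finally have gi: "(\<integral>x. (\<Sum>k\<in>UNIV. indicator (\<phi> -` {k}) x * (cost w A lam (prior D) k * \<eta> x k)) \<partial>?PX)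
      = (\<Sum>k\<in>UNIV. (w k + lam $ k) / prior D k * I k)"
    by (simp add: cost_lam[OF lam])
  have "Flag w A \<alpha> D lam \<phi> = (\<Sum>k\<in>UNIV. w k * Rk D k \<phi>) + (\<Sum>k\<in>A. lam $ k * Rk D k \<phi>) - (\<Sum>k\<in>A. lam $ k * \<alpha> k)"
    unfolding Flag_def by (simp add: right_diff_distrib sum_subtractf)
  also have "\<dots> = (\<Sum>k\<in>UNIV. (w k + lam $ k) * Rk D k \<phi>) - (\<Sum>k\<in>A. lam $ k * \<alpha> k)"
    unfolding sA by (simp add: distrib_right sum.distrib)
  also have "(\<Sum>k\<in>UNIV. (w k + lam $ k) * Rk D k \<phi>) = (\<Sum>k\<in>UNIV. w k + lam $ k) - (\<Sum>k\<in>UNIV. (w k + lam $ k) / prior D k * I k)"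
    unfolding R by (simp add: right_diff_distrib sum_subtractf)
  finally show ?thesis unfolding gi by simp
qed




lemma sup_to_zero:
  fixes F :: "nat \<Rightarrow> 'l \<Rightarrow> 'x \<Rightarrow> real"
  assumes Lne: "L \<noteq> {}"
   and meas: "\<And>n l. l \<in> L \<Longrightarrow> F n l \<in> borel_measurable P"
   and dom: "integrable P g"
   and bnd: "\<And>n l x. l \<in> L \<Longrightarrow> x \<in> space P \<Longrightarrow> 0 \<le> F n l x \<and> F n l x \<le> g x"
   and hb: "\<And>n l x. l \<in> L \<Longrightarrow> x \<in> space P \<Longrightarrow> F n l x \<le> h n x"
   and hc: "AE x in P. (\<lambda>n. h n x) \<longlonglongrightarrow> 0"
  shows "(\<lambda>n. SUP l\<in>L. integral\<^sup>L P (F n l)) \<longlonglongrightarrow> 0"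
proof -
  have int: "integrable P (F n l)" if "l \<in> L" for n l
    using dom meas[OF that] bnd[OF that] by (intro Bochner_Integration.integrable_bound[OF dom]) (auto intro!: AE_I2 intro: order_trans[OF _ abs_ge_self])
  have le: "integral\<^sup>L P (F n l) \<le> integral\<^sup>L P g" if "l \<in> L" for n l
    using int[OF that] dom bnd[OF that] by (intro Bochner_Integration.integral_mono) auto
  have ge: "0 \<le> integral\<^sup>L P (F n l)" if "l \<in> L" for n l
    using bnd[OF that] by (intro Bochner_Integration.integral_nonneg) auto
  have bdd: "bdd_above ((\<lambda>l. integral\<^sup>L P (F n l)) ` L)" for n
    using le by (intro bdd_aboveI[of _ "integral\<^sup>L P g"]) auto
  have "\<forall>n. \<exists>l\<in>L. (SUP l\<in>L. integral\<^sup>L P (F n l)) - 1 / real (Suc n) < integral\<^sup>L P (F n l)"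
  proof
    fix n
    have "(SUP l\<in>L. integral\<^sup>L P (F n l)) - 1 / real (Suc n) < (SUP l\<in>L. integral\<^sup>L P (F n l))" by simp
    then show "\<exists>l\<in>L. (SUP l\<in>L. integral\<^sup>L P (F n l)) - 1 / real (Suc n) < integral\<^sup>L P (F n l)"
      using less_cSUP_iff[OF Lne bdd] by blast
  qed
  then obtain ls where ls: "\<And>n. ls n \<in> L"
    "\<And>n. (SUP l\<in>L. integral\<^sup>L P (F n l)) - 1 / real (Suc n) < integral\<^sup>L P (F n (ls n))"
    by metis
  have "(\<lambda>n. integral\<^sup>L P (F n (ls n))) \<longlonglongrightarrow> integral\<^sup>L P (\<lambda>x. 0)"
  proof (rule integral_dominated_convergence[OF _ _ dom])
    show "(\<lambda>x. 0::real) \<in> borel_measurable P" by simp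
    show "\<And>n. F n (ls n) \<in> borel_measurable P" using meas ls by blast
    show "AE x in P. norm (F n (ls n) x) \<le> g x" for n
      using bnd[OF ls(1)] by (intro AE_I2) auto
    show "AE x in P. (\<lambda>n. F n (ls n) x) \<longlonglongrightarrow> 0"
      using hc
    proof (rule AE_mp[OF _ AE_I2[OF impI]])
      fix x assume x: "x \<in> space P" and hx: "(\<lambda>n. h n x) \<longlonglongrightarrow> 0"
      show "(\<lambda>n. F n (ls n) x) \<longlonglongrightarrow> 0"
      proof (rule tendsto_sandwich[of "\<lambda>_. 0" _ _ "\<lambda>n. h n x"])
        show "\<forall>\<^sub>F n in sequentially. 0 \<le> F n (ls n) x" using bnd[OF ls(1) x] by simp
        show "\<forall>\<^sub>F n in sequentially. F n (ls n) x \<le> h n x" using hb[OF ls(1) x] by simp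
      qed (auto simp: hx)
    qed
  qed
  hence c1: "(\<lambda>n. integral\<^sup>L P (F n (ls n))) \<longlonglongrightarrow> 0" by simp
  have c2: "(\<lambda>n. integral\<^sup>L P (F n (ls n)) + 1 / real (Suc n)) \<longlonglongrightarrow> 0"
    using tendsto_add[OF c1 LIMSEQ_inverse_real_of_nat] by (simp add: inverse_eq_divide)
  obtain l0 where l0: "l0 \<in> L" using Lne by blast
  show ?thesis
  proof (rule tendsto_sandwich[of "\<lambda>_. 0" _ _ "\<lambda>n. integral\<^sup>L P (F n (ls n)) + 1 / real (Suc n)"])
    show "\<forall>\<^sub>F n in sequentially. 0 \<le> (SUP l\<in>L. integral\<^sup>L P (F n l))"
      using ge[OF l0] cSUP_upper[OF l0 bdd] by (intro always_eventually allI) (meson order_trans)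
    show "\<forall>\<^sub>F n in sequentially. (SUP l\<in>L. integral\<^sup>L P (F n l)) \<le> integral\<^sup>L P (F n (ls n)) + 1 / real (Suc n)"
      using ls(2) by (intro always_eventually allI) (smt (verit))
  qed (insert c2, simp_all)
qed




definition gv :: "('k::finite \<Rightarrow> real) \<Rightarrow> 'k set \<Rightarrow> ('x \<times> 'k) measure \<Rightarrow> ('x \<Rightarrow> 'k \<Rightarrow> real)
   \<Rightarrow> real^'k \<Rightarrow> ('x \<Rightarrow> 'k) \<Rightarrow> 'x \<Rightarrow> real" where
  "gv w A D \<eta> lam \<phi> x = (\<Sum>k\<in>UNIV. indicator (\<phi> -` {k}) x * (cost w A lam (prior D) k * \<eta> x k))"

lemma gv_eq: "gv w A D \<eta> lam \<phi> x = cost w A lam (prior D) (\<phi> x) * \<eta> x (\<phi> x)"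
proof -
  have "gv w A D \<eta> lam \<phi> x = (\<Sum>k\<in>UNIV. if k = \<phi> x then cost w A lam (prior D) k * \<eta> x k else 0)"
    unfolding gv_def by (intro sum.cong) (auto simp: indicator_def)
  also have "\<dots> = cost w A lam (prior D) (\<phi> x) * \<eta> x (\<phi> x)" by simp
  finally show ?thesis .
qed

lemma gv_meas:
  fixes D :: "('x::topological_space \<times> 'k::finite) measure"
  assumes \<phi>: "\<phi> \<in> borel \<rightarrow>\<^sub>M count_space UNIV" and post: "is_posterior D \<eta>"
  shows "gv w A D \<eta> lam \<phi> \<in> borel_measurable borel"
proof -
  have Bm: "\<phi> -` B \<in> sets borel" for B
    using measurable_sets[OF \<phi>, of B] by simp
  have em: "(\<lambda>x. \<eta> x k) \<in> borel_measurable borel" for k by (rule post_meas[OF post])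
  show ?thesis unfolding gv_def
    by (intro borel_measurable_sum borel_measurable_times borel_measurable_const em
        borel_measurable_indicator Bm)
qed

lemma gv_int:
  fixes D :: "('x::topological_space \<times> 'k::finite) measure"
  assumes D: "prob_space D" "sets D = sets (borel \<Otimes>\<^sub>M count_space UNIV)"
   and prior: "\<And>k. 0 < prior D k"
   and post: "is_posterior D \<eta>"
   and \<phi>: "\<phi> \<in> borel \<rightarrow>\<^sub>M count_space UNIV"
  shows "integrable (distr D borel fst) (gv w A D \<eta> lam \<phi>)"
proof -
  have Bm: "\<phi> -` B \<in> sets borel" for B
    using measurable_sets[OF \<phi>, of B] by simp
  have "integrable (distr D borel fst) (\<lambda>x. indicator (\<phi> -` {k}) x * (cost w A lam (prior D) k * \<eta> x k))" for k
    using integrable_mult_indicator[of "\<phi> -` {k}" "distr D borel fst" "\<lambda>x. cost w A lam (prior D) k * \<eta> x k"]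
      integrable_mult_right[OF eta_integrable[OF D prior post]] Bm by simp
  then show ?thesis unfolding gv_def by (intro Bochner_Integration.integrable_sum)
qed

lemma Flag_diff:
  fixes D :: "('x::topological_space \<times> 'k::finite) measure"
  assumes D: "prob_space D" "sets D = sets (borel \<Otimes>\<^sub>M count_space UNIV)"
   and prior: "\<And>k. 0 < prior D k"
   and post: "is_posterior D \<eta>"
   and lam: "lam \<in> lam_space A"
   and \<phi>1: "\<phi>1 \<in> borel \<rightarrow>\<^sub>M count_space UNIV"
   and \<phi>2: "\<phi>2 \<in> borel \<rightarrow>\<^sub>M count_space UNIV"
  shows "Flag w A \<alpha> D lam \<phi>1 - Flag w A \<alpha> D lam \<phi>2
     = (\<integral>x. gv w A D \<eta> lam \<phi>2 x - gv w A D \<eta> lam \<phi>1 x \<partial>distr D borel fst)"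
proof -
  have "Flag w A \<alpha> D lam \<phi>1 - Flag w A \<alpha> D lam \<phi>2
     = (\<integral>x. gv w A D \<eta> lam \<phi>2 x \<partial>distr D borel fst) - (\<integral>x. gv w A D \<eta> lam \<phi>1 x \<partial>distr D borel fst)"
    unfolding Flag_formula[OF D prior post lam \<phi>1] Flag_formula[OF D prior post lam \<phi>2] gv_def
    by simp
  also have "\<dots> = (\<integral>x. gv w A D \<eta> lam \<phi>2 x - gv w A D \<eta> lam \<phi>1 x \<partial>distr D borel fst)"
    by (rule Bochner_Integration.integral_diff[symmetric]) (intro gv_int[OF D prior post] \<phi>1 \<phi>2)+
  finally show ?thesis .
qed




lemma gap_bound:
  fixes a b p p' :: "'k::finite \<Rightarrow> real"
  assumes lam: "lam \<in> lam_space A" and wpos: "\<And>k. 0 \<le> w k" and lamR: "\<And>k. lam $ k \<le> R"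
   and j1: "j1 \<in> argmax_set (\<lambda>k. cost w A lam p k * a k)"
   and j2: "j2 \<in> argmax_set (\<lambda>k. cost w A lam p' k * b k)"
  shows "0 \<le> cost w A lam p j1 * a j1 - cost w A lam p j2 * a j2 \<and>
         cost w A lam p j1 * a j1 - cost w A lam p j2 * a j2
           \<le> 2 * (\<Sum>k\<in>UNIV. (w k + R) * \<bar>a k / p k - b k / p' k\<bar>)"
proof -
  define s where "s k = w k + lam $ k" for k
  have s0: "0 \<le> s k" for k using wpos lam unfolding s_def lam_space_def by (smt (verit) mem_Collect_eq)
  have sR: "s k \<le> w k + R" for k using lamR unfolding s_def by smt
  have ca: "cost w A lam q k * v = s k * (v / q k)" for q k v
    unfolding cost_lam[OF lam] s_def by simp
  define E where "E = (\<Sum>k\<in>UNIV. (w k + R) * \<bar>a k / p k - b k / p' k\<bar>)"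
  have e: "\<bar>cost w A lam p k * a k - cost w A lam p' k * b k\<bar> \<le> E" for k
  proof -
    have "\<bar>cost w A lam p k * a k - cost w A lam p' k * b k\<bar> = s k * \<bar>a k / p k - b k / p' k\<bar>"
    proof -
      have "s k * (a k / p k) - s k * (b k / p' k) = s k * (a k / p k - b k / p' k)"
        by (simp add: right_diff_distrib)
      then show ?thesis unfolding ca using s0[of k] by (simp only: abs_mult)
    qed
    also have "\<dots> \<le> (w k + R) * \<bar>a k / p k - b k / p' k\<bar>"
      using sR[of k] by (intro mult_right_mono) auto
    also have "\<dots> \<le> E" unfolding E_def
      by (rule member_le_sum) (use s0 sR in \<open>auto intro!: mult_nonneg_nonneg order_trans[OF s0 sR]\<close>)
    finally show ?thesis .
  qed
  have m1: "cost w A lam p j2 * a j2 \<le> cost w A lam p j1 * a j1"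
    using j1 unfolding argmax_set_def by blast
  have m2: "cost w A lam p' j1 * b j1 \<le> cost w A lam p' j2 * b j2"
    using j2 unfolding argmax_set_def by blast
  show ?thesis
    using m1 m2 e[of j1] e[of j2] unfolding E_def[symmetric] by (smt (verit))
qed




lemma pi_hat_conv:
  fixes Z :: "nat \<Rightarrow> 'w \<Rightarrow> ('x::topological_space) \<times> 'k"
  assumes M: "prob_space M"
    and D: "prob_space D" "sets D = sets (borel \<Otimes>\<^sub>M count_space UNIV)"
    and iid: "prob_space.indep_vars M (\<lambda>_. borel \<Otimes>\<^sub>M count_space UNIV) Z UNIV"
    and ident: "\<And>i. distr M (borel \<Otimes>\<^sub>M count_space UNIV) (Z i) = D"
  shows "AE \<omega> in M. (\<lambda>n. pi_hat Z n \<omega> k) \<longlonglongrightarrow> prior D k"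
proof -
  interpret prob_space M by (rule M)
  define Y :: "'x \<times> 'k \<Rightarrow> real" where "Y z = indicator {k} (snd z)" for z
  have Ym: "Y \<in> borel_measurable (borel \<Otimes>\<^sub>M count_space UNIV)"
    unfolding Y_def by (rule measurable_compose[OF measurable_snd borel_measurable_count_space])
  have Zm: "Z i \<in> M \<rightarrow>\<^sub>M (borel \<Otimes>\<^sub>M count_space UNIV)" for i
    using iid unfolding indep_vars_def by blast
  define X where "X i \<omega> = Y (Z i \<omega>)" for i \<omega>
  have ind: "indep_vars (\<lambda>_. borel) X UNIV"
    unfolding X_def by (rule indep_vars_compose2[OF iid]) (rule Ym)
  have dX: "distr M borel (X i) = distr D borel Y" for i
  proof -
    have "distr M borel (X i) = distr M borel (Y \<circ> Z i)" unfolding X_def o_def by simp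
    also have "\<dots> = distr (distr M (borel \<Otimes>\<^sub>M count_space UNIV) (Z i)) borel Y"
      by (rule distr_distr[symmetric, OF Ym Zm])
    finally show ?thesis by (simp add: ident)
  qed
  have idd: "distr M borel (X i) = distr M borel (X 0)" for i by (simp add: dX)
  have rng: "X i \<omega> \<in> {0..1}" for i \<omega> unfolding X_def Y_def by (auto simp: indicator_def)
  have E: "expectation (X 0) = prior D k"
  proof -
    have "expectation (X 0) = (\<integral>z. Y z \<partial>distr M (borel \<Otimes>\<^sub>M count_space UNIV) (Z 0))"
      unfolding X_def by (rule integral_distr[symmetric, OF Zm Ym])
    also have "\<dots> = (\<integral>z. indicator {z. snd z = k} z \<partial>D)"
      unfolding ident Y_def by (intro Bochner_Integration.integral_cong) (auto simp: indicator_def)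
    also have "\<dots> = measure D {z. snd z = k}"
      using space_D[OF D(2)] by simp
    also have "\<dots> = prior D k" unfolding prior_def using space_D[OF D(2)] by simp
    finally show ?thesis .
  qed
  have sumc: "(\<Sum>i<n. X i \<omega>) = real (card {i. i < n \<and> snd (Z i \<omega>) = k})" for n \<omega>
  proof -
    have "(\<Sum>i<n. X i \<omega>) = (\<Sum>i\<in>{..<n}. indicator {i. snd (Z i \<omega>) = k} i)"
      unfolding X_def Y_def by (intro sum.cong) (auto simp: indicator_def)
    also have "\<dots> = (\<Sum>i\<in>{..<n}. if i \<in> {i. snd (Z i \<omega>) = k} then (1::real) else 0)"
      by (intro sum.cong) (auto simp: indicator_def)
    also have "\<dots> = (\<Sum>i\<in>{..<n} \<inter> {i. snd (Z i \<omega>) = k}. (1::real))"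
      by (rule sum.inter_restrict[symmetric]) simp
    also have "\<dots> = real (card ({..<n} \<inter> {i. snd (Z i \<omega>) = k}))"
      by simp
    also have "{..<n} \<inter> {i. snd (Z i \<omega>) = k} = {i. i < n \<and> snd (Z i \<omega>) = k}" by auto
    finally show ?thesis .
  qed
  have "AE \<omega> in M. (\<lambda>n. (\<Sum>i<n. X i \<omega>) / real n) \<longlonglongrightarrow> expectation (X 0)"
    by (rule slln_bounded[OF M ind idd rng])
  then show ?thesis
    unfolding E sumc pi_hat_def by simp
qed


lemma cost_abs_bound:
  fixes v p :: "'k::finite \<Rightarrow> real"
  assumes lam: "lam \<in> lam_space A" and wpos: "\<And>k. 0 \<le> w k" and lamR: "\<And>k. lam $ k \<le> R"
    and p: "\<And>k. 0 < p k"
  shows "\<bar>cost w A lam p j * v j\<bar> \<le> (\<Sum>k\<in>UNIV. (w k + R) / p k * \<bar>v k\<bar>)"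
proof -
  have l0: "0 \<le> lam $ k" for k using lam unfolding lam_space_def by auto
  have "\<bar>cost w A lam p j * v j\<bar> = (w j + lam $ j) / p j * \<bar>v j\<bar>"
    unfolding cost_lam[OF lam] using wpos[of j] l0[of j] p[of j] by (simp add: abs_mult)
  also have "\<dots> \<le> (w j + R) / p j * \<bar>v j\<bar>"
    using lamR[of j] p[of j] by (intro mult_right_mono divide_right_mono) auto
  also have "\<dots> \<le> (\<Sum>k\<in>UNIV. (w k + R) / p k * \<bar>v k\<bar>)"
  proof (rule member_le_sum)
    fix k assume "k \<in> UNIV - {j}"
    have "0 \<le> w k + R" using wpos[of k] l0[of k] lamR[of k] by linarith
    then show "0 \<le> (w k + R) / p k * \<bar>v k\<bar>" using p[of k] by simp
  qed auto
  finally show ?thesis .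
qed


theorem lemma5:
  fixes D :: "((real^('p::finite)) \<times> 'k::finite) measure"
    and \<eta> :: "real^'p \<Rightarrow> 'k \<Rightarrow> real"
    and A :: "'k set" and \<alpha> w :: "'k \<Rightarrow> real"
    and M :: "'w measure" and Z :: "nat \<Rightarrow> 'w \<Rightarrow> (real^'p) \<times> 'k"
    and Bset :: "'b::euclidean_space set"
    and q :: "'b \<Rightarrow> real^'p \<Rightarrow> 'k \<Rightarrow> real"
    and est :: "((real^'p) \<times> 'k) list \<Rightarrow> 'b"
    and phis :: "real^'k \<Rightarrow> real^'p \<Rightarrow> 'k"
    and phih :: "nat \<Rightarrow> 'w \<Rightarrow> real^'k \<Rightarrow> real^'p \<Rightarrow> 'k"
    and lamstar :: "real^'k"
    and \<Lambda> :: "(real^'k) set"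
  assumes D: "prob_space D" "sets D = sets (borel \<Otimes>\<^sub>M count_space UNIV)"
    and prior: "\<And>k. 0 < prior D k \<and> prior D k < 1"
    and post: "is_posterior D \<eta>"
    and alpha: "\<And>k. k \<in> A \<Longrightarrow> 0 \<le> \<alpha> k \<and> \<alpha> k < 1"
    and wpos: "\<And>k. 0 \<le> w k"
    \<comment> \<open>training data: i.i.d. copies of (X,Y)\<close>
    and M: "prob_space M"
    and iid: "prob_space.indep_vars M (\<lambda>_. borel \<Otimes>\<^sub>M count_space UNIV) Z UNIV"
    and ident: "\<And>i. distr M (borel \<Otimes>\<^sub>M count_space UNIV) (Z i) = D"
    \<comment> \<open>parametric family on a compact parameter set, estimator from the sample\<close>
    and Bcpt: "compact Bset"
    and qprob: "\<And>\<beta> x. \<beta> \<in> Bset \<Longrightarrow> (\<forall>k. 0 \<le> q \<beta> x k) \<and> (\<Sum>k\<in>UNIV. q \<beta> x k) = 1"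
    and est: "\<And>zs. est zs \<in> Bset"
    \<comment> \<open>oracle classifier phi*_lambda (any measurable argmax selection)\<close>
    and phis: "\<And>lam x. phis lam x \<in> argmax_set (\<lambda>k. cost w A lam (prior D) k * \<eta> x k)"
    and phis_meas: "\<And>lam. phis lam \<in> borel \<rightarrow>\<^sub>M count_space UNIV"
    \<comment> \<open>plug-in classifier hat phi_lambda (any measurable argmax selection)\<close>
    and phih: "\<And>n \<omega> lam x. lam \<in> lam_space A \<Longrightarrow>
        phih n \<omega> lam x \<in> argmax_set (\<lambda>k. cost w A lam (pi_hat Z n \<omega>) k
                                          * q (est (map (\<lambda>i. Z i \<omega>) [0..<n])) x k)"
    and phih_meas: "\<And>n \<omega> lam. lam \<in> lam_space A \<Longrightarrow> phih n \<omega> lam \<in> borel \<rightarrow>\<^sub>M count_space UNIV"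
    \<comment> \<open>lambda* = argmax of G over R_+^{|A|}\<close>
    and lamstar: "lamstar \<in> lam_space A"
      "\<And>lam. lam \<in> lam_space A \<Longrightarrow> Flag w A \<alpha> D lam (phis lam) \<le> Flag w A \<alpha> D lamstar (phis lamstar)"
      "\<And>lam. lam \<in> lam_space A \<Longrightarrow> Flag w A \<alpha> D lam (phis lam) = Flag w A \<alpha> D lamstar (phis lamstar) \<Longrightarrow> lam = lamstar"
    \<comment> \<open>(A2')\<close>
    and A2': "\<And>k. AE x in distr D borel fst. AE \<omega> in M.
        (\<lambda>n. q (est (map (\<lambda>i. Z i \<omega>) [0..<n])) x k) \<longlonglongrightarrow> \<eta> x k"
    \<comment> \<open>(A3)\<close>
    and A3: "twice_cont_diff_negdef_at (\<lambda>lam. Flag w A \<alpha> D lam (phis lam))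
               (lam_space A) (lam_subspace A) lamstar"
    \<comment> \<open>(A4)\<close>
    and A4: "AE x in distr D borel fst. \<forall>k. continuous_on Bset (\<lambda>\<beta>. q \<beta> x k)"
    and Lam: "\<Lambda> \<subseteq> lam_space A" "bounded \<Lambda>" "\<Lambda> \<noteq> {}"
  shows "AE \<omega> in M. (\<lambda>n. SUP lam\<in>\<Lambda>. \<bar>Flag w A \<alpha> D lam (phih n \<omega> lam) - Flag w A \<alpha> D lam (phis lam)\<bar>)
           \<longlonglongrightarrow> 0"
  proof -
  interpret M: prob_space M by (rule M)
  let ?PX = "distr D borel fst"
  have prior_pos: "\<And>k. 0 < prior D k" using prior by blast
  obtain R where R: "R > 0" "\<And>lam. lam \<in> \<Lambda> \<Longrightarrow> norm lam \<le> R"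
    using Lam(2) unfolding bounded_pos by blast
  have lamsp: "\<And>lam. lam \<in> \<Lambda> \<Longrightarrow> lam \<in> lam_space A" using Lam(1) by blast
  have lamR: "\<And>lam k. lam \<in> \<Lambda> \<Longrightarrow> lam $ k \<le> R"
    using R(2) component_le_norm_cart by (smt (verit))
  define bh where "bh n \<omega> = est (map (\<lambda>i. Z i \<omega>) [0..<n])" for n \<omega>
  have bhB: "\<And>n \<omega>. bh n \<omega> \<in> Bset" unfolding bh_def by (rule est)
  have "\<forall>k\<in>UNIV. AE x in ?PX. AE \<omega> in M. (\<lambda>n. q (bh n \<omega>) x k) \<longlonglongrightarrow> \<eta> x k"
    using A2' unfolding bh_def by blast
  hence "AE x in ?PX. \<forall>k\<in>UNIV. AE \<omega> in M. (\<lambda>n. q (bh n \<omega>) x k) \<longlonglongrightarrow> \<eta> x k"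
    by (subst AE_finite_all) auto
  hence ae2: "AE x in ?PX. AE \<omega> in M. \<forall>k. (\<lambda>n. q (bh n \<omega>) x k) \<longlonglongrightarrow> \<eta> x k"
  proof (rule eventually_mono)
    fix x assume "\<forall>k\<in>UNIV. AE \<omega> in M. (\<lambda>n. q (bh n \<omega>) x k) \<longlonglongrightarrow> \<eta> x k"
    then show "AE \<omega> in M. \<forall>k. (\<lambda>n. q (bh n \<omega>) x k) \<longlonglongrightarrow> \<eta> x k"
      by (intro eventually_all_finite) simp
  qed
  have aex: "AE x in ?PX. (\<forall>k. continuous_on Bset (\<lambda>\<beta>. q \<beta> x k)) \<and>
                 (AE \<omega> in M. \<forall>k. (\<lambda>n. q (bh n \<omega>) x k) \<longlonglongrightarrow> \<eta> x k)"
    using eventually_conj[OF A4 ae2] by (rule eventually_mono) blast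
  then obtain N where N1: "{x \<in> space ?PX. \<not> ((\<forall>k. continuous_on Bset (\<lambda>\<beta>. q \<beta> x k)) \<and>
                 (AE \<omega> in M. \<forall>k. (\<lambda>n. q (bh n \<omega>) x k) \<longlonglongrightarrow> \<eta> x k))} \<subseteq> N"
       and N2: "emeasure ?PX N = 0" and N3: "N \<in> sets ?PX"
    by (rule AE_E)
  have N: "{x \<in> space ?PX. \<not> ((\<forall>k. continuous_on Bset (\<lambda>\<beta>. q \<beta> x k)) \<and>
                 (AE \<omega> in M. \<forall>k. (\<lambda>n. q (bh n \<omega>) x k) \<longlonglongrightarrow> \<eta> x k))} \<subseteq> N" "N \<in> null_sets ?PX"
    using N1 N2 N3 by (auto intro: null_setsI)
  define G where "G = - N"
  have Gp: "(\<forall>k. continuous_on Bset (\<lambda>\<beta>. q \<beta> x k)) \<and>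
                 (AE \<omega> in M. \<forall>k. (\<lambda>n. q (bh n \<omega>) x k) \<longlonglongrightarrow> \<eta> x k)" if "x \<in> G" for x
    using N(1) that unfolding G_def by auto
  have aeG: "AE \<omega> in M. \<forall>x\<in>G. \<forall>k. (\<lambda>n. q (bh n \<omega>) x k) \<longlonglongrightarrow> \<eta> x k"
    by (rule swap_AE[OF Bcpt bhB]) (use Gp in auto)
  have "\<forall>k\<in>UNIV. AE \<omega> in M. (\<lambda>n. pi_hat Z n \<omega> k) \<longlonglongrightarrow> prior D k"
    using pi_hat_conv[OF M D iid ident] by blast
  hence aepi: "AE \<omega> in M. \<forall>k. (\<lambda>n. pi_hat Z n \<omega> k) \<longlonglongrightarrow> prior D k"
    by (intro eventually_all_finite) simp
  have aeN: "AE x in ?PX. x \<in> G" using AE_not_in[OF N(2)] unfolding G_def by simp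
  define g where "g x = 2 * (\<Sum>k\<in>UNIV. (w k + R) / prior D k * \<bar>\<eta> x k\<bar>)" for x
  have gint: "integrable ?PX g"
    unfolding g_def
    by (intro integrable_mult_right Bochner_Integration.integrable_sum integrable_abs
          eta_integrable[OF D prior_pos post])
  show ?thesis
    using aeG aepi
  proof (eventually_elim)
    case (elim \<omega>)
    note H1 = elim(1) and H2 = elim(2)
    define F where "F n lam x = gv w A D \<eta> lam (phis lam) x - gv w A D \<eta> lam (phih n \<omega> lam) x" for n lam x
    define h where "h n x = 2 * (\<Sum>k\<in>UNIV. (w k + R) * \<bar>\<eta> x k / prior D k - q (bh n \<omega>) x k / pi_hat Z n \<omega> k\<bar>)" for n x
    have gap: "0 \<le> F n lam x \<and> F n lam x \<le> h n x" if lam: "lam \<in> \<Lambda>" for n lam x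
      unfolding F_def h_def gv_eq
      by (rule gap_bound[OF lamsp[OF lam] wpos lamR[OF lam] phis]) (use phih[OF lamsp[OF lam]] in \<open>simp add: bh_def\<close>)
    have Fg: "F n lam x \<le> g x" if lam: "lam \<in> \<Lambda>" for n lam x
    proof -
      have "F n lam x \<le> \<bar>gv w A D \<eta> lam (phis lam) x\<bar> + \<bar>gv w A D \<eta> lam (phih n \<omega> lam) x\<bar>"
        unfolding F_def by linarith
      also have "\<dots> \<le> g x"
      proof -
        have cb: "\<bar>cost w A lam (prior D) j * \<eta> x j\<bar> \<le> (\<Sum>k\<in>UNIV. (w k + R) / prior D k * \<bar>\<eta> x k\<bar>)" for j
          by (rule cost_abs_bound[OF lamsp[OF lam]]) (use wpos lamR[OF lam] prior_pos in auto)
        show ?thesis unfolding g_def gv_eq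
          using cb[of "phis lam x"] cb[of "phih n \<omega> lam x"] by linarith
      qed
      finally show ?thesis .
    qed
    have Fm: "F n lam \<in> borel_measurable ?PX" if lam: "lam \<in> \<Lambda>" for n lam
      unfolding F_def using gv_meas[OF phis_meas post] gv_meas[OF phih_meas[OF lamsp[OF lam]] post]
      by simp
    have eqS: "(SUP lam\<in>\<Lambda>. \<bar>Flag w A \<alpha> D lam (phih n \<omega> lam) - Flag w A \<alpha> D lam (phis lam)\<bar>)
        = (SUP lam\<in>\<Lambda>. integral\<^sup>L ?PX (F n lam))" for n
    proof (rule SUP_cong[OF refl])
      fix lam assume lam: "lam \<in> \<Lambda>"
      have "Flag w A \<alpha> D lam (phih n \<omega> lam) - Flag w A \<alpha> D lam (phis lam) = integral\<^sup>L ?PX (F n lam)"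
        unfolding F_def
        by (rule Flag_diff[OF D prior_pos post lamsp[OF lam] phih_meas[OF lamsp[OF lam]] phis_meas])
      moreover have "0 \<le> integral\<^sup>L ?PX (F n lam)"
        using gap[OF lam] by (intro Bochner_Integration.integral_nonneg) auto
      ultimately show "\<bar>Flag w A \<alpha> D lam (phih n \<omega> lam) - Flag w A \<alpha> D lam (phis lam)\<bar> = integral\<^sup>L ?PX (F n lam)"
        by simp
    qed
    have hc: "AE x in ?PX. (\<lambda>n. h n x) \<longlonglongrightarrow> 0"
      using aeN
    proof (rule eventually_mono)
      fix x assume x: "x \<in> G"
      have c1: "\<And>k. (\<lambda>n. q (bh n \<omega>) x k) \<longlonglongrightarrow> \<eta> x k" using H1 x by blast
      have c2: "\<And>k. (\<lambda>n. pi_hat Z n \<omega> k) \<longlonglongrightarrow> prior D k" using H2 by blast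
      have "(\<lambda>n. h n x) \<longlonglongrightarrow> 2 * (\<Sum>k\<in>UNIV. (w k + R) * \<bar>\<eta> x k / prior D k - \<eta> x k / prior D k\<bar>)"
        unfolding h_def
        by (intro tendsto_intros c1 c2) (use prior_pos in \<open>auto simp: less_imp_neq[symmetric]\<close>)
      then show "(\<lambda>n. h n x) \<longlonglongrightarrow> 0" by simp
    qed
    have "(\<lambda>n. SUP lam\<in>\<Lambda>. integral\<^sup>L ?PX (F n lam)) \<longlonglongrightarrow> 0"
    proof (rule sup_to_zero[OF Lam(3) Fm gint])
      show "\<And>n l x. l \<in> \<Lambda> \<Longrightarrow> x \<in> space ?PX \<Longrightarrow> 0 \<le> F n l x \<and> F n l x \<le> g x"
        using gap Fg by blast
      show "\<And>n l x. l \<in> \<Lambda> \<Longrightarrow> x \<in> space ?PX \<Longrightarrow> F n l x \<le> h n x"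
        using gap by blast
    qed (use hc in auto)
    then show ?case unfolding eqS .
  qed
qed

end
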